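(* Let $(X_B,X_C,X_R)$ be an OCC of a graph $G$, let $f_X$ be a proper $2$-coloring of $G[X_B]$, and let $B^\ast \subseteq X_B$ satisfy property $(\star)$ with respect to $G$, $(X_B,X_C,X_R)$ and $f_X$. If $G$ contains a $z$-tight OCC $(A_B,A_C,A_R)$, then $G$ contains a $z$-tight OCC $(A_B^\ast, A_C^\ast, A_R^\ast)$ with $|A_C^\ast| = |A_C|$ and $A_C^\ast \cap X_B \subseteq B^\ast$.
   Context: An OCT of $G$ is a set $S \subseteq V(G)$ with $G - S$ bipartite; $\mathrm{oct}(G)$ is its minimum size. An odd cycle cut (OCC) of $G$ is a partition $(X_B, X_C, X_R)$ of $V(G)$ such that $G[X_B]$ is bipartite, there is no edge between $X_B$ and $X_R$, and $X_B \cup X_C \neq \emptyset$. It is tight if $|X_C| = \mathrm{oct}(G[X_B \cup X_C])$. An $X_C$-certificate of order $z$ is a subgraph $H$ of $G$ such that $H - X_C$ is bipartite, $\mathrm{oct}(H)=|X_C|$, and each connected component $H'$ of $H$ has $|X_C\cap V(H')|\le z$. A tight OCC $(A_B,A_C,A_R)$ is $z$-tight if $G[A_B\cup A_C]$ contains an $A_C$-certificate of order $z$. A vertex set $X$ separates vertex sets $S,T$ if no component of the graph minus $X$ meets both. Auxiliary graph: $G_{\mathrm{aux}}$ is obtained from a copy of $G[X_B]$ by adding, for each $v \in X_C$, new vertices $v^{(0)}, v^{(1)}$ and, for each $u \in N_G(v) \cap X_B$, the edge $v^{(f_X(u))}u$; $T := \{v^{(i)} : v \in X_C, i \in \{0,1\}\}$.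 Property $(\star)$ of $B^\ast \subseteq X_B$: for every partition $(T_1,T_2,T_3,T_X)$ of $T$ into four possibly empty parts, if there exists $S \subseteq X_B$ with $|S| \le |T|$ separating $T_i$ and $T_j$ in $G_{\mathrm{aux}} - T_X$ for all $1 \le i < j \le 3$, then $B^\ast$ contains such a set $S$ of minimum possible size. *)

theory Defs
  imports Main
begin

definition graph :: "'a set \<Rightarrow> ('a \<Rightarrow> 'a \<Rightarrow> bool) \<Rightarrow> bool" where
  "graph V E \<longleftrightarrow> finite V \<and> (\<forall>u v. E u v \<longrightarrow> E v u)
     \<and> (\<forall>u. \<not> E u u) \<and> (\<forall>u v. E u v \<longrightarrow> u \<in> V \<and> v \<in> V)"

definition proper_2col :: "('a \<Rightarrow> 'a \<Rightarrow> bool) \<Rightarrow> 'a set \<Rightarrow> ('a \<Rightarrow> bool) \<Rightarrow> bool" where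
  "proper_2col E S f \<longleftrightarrow> (\<forall>u\<in>S. \<forall>v\<in>S. E u v \<longrightarrow> f u \<noteq> f v)"

definition bipartite_on :: "('a \<Rightarrow> 'a \<Rightarrow> bool) \<Rightarrow> 'a set \<Rightarrow> bool" where
  "bipartite_on E S \<longleftrightarrow> (\<exists>f. proper_2col E S f)"

text \<open>oct of the graph (V,E): minimum size of a vertex set whose removal leaves
a bipartite graph. oct(G[S]) is oct S E.\<close>
definition oct :: "'a set \<Rightarrow> ('a \<Rightarrow> 'a \<Rightarrow> bool) \<Rightarrow> nat" where
  "oct V E = Min {card X | X. X \<subseteq> V \<and> bipartite_on E (V - X)}"

definition is_OCC :: "'a set \<Rightarrow> ('a \<Rightarrow> 'a \<Rightarrow> bool) \<Rightarrow> 'a set \<Rightarrow> 'a set \<Rightarrow> 'a set \<Rightarrow> bool" where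
  "is_OCC V E XB XC XR \<longleftrightarrow>
     XB \<union> XC \<union> XR = V \<and> XB \<inter> XC = {} \<and> XB \<inter> XR = {} \<and> XC \<inter> XR = {}
     \<and> bipartite_on E XB \<and> (\<forall>u\<in>XB. \<forall>v\<in>XR. \<not> E u v) \<and> XB \<union> XC \<noteq> {}"

definition tight_OCC :: "'a set \<Rightarrow> ('a \<Rightarrow> 'a \<Rightarrow> bool) \<Rightarrow> 'a set \<Rightarrow> 'a set \<Rightarrow> 'a set \<Rightarrow> bool" where
  "tight_OCC V E XB XC XR \<longleftrightarrow> is_OCC V E XB XC XR \<and> card XC = oct (XB \<union> XC) E"

definition reach :: "'a set \<Rightarrow> ('a \<Rightarrow> 'a \<Rightarrow> bool) \<Rightarrow> 'a \<Rightarrow> 'a \<Rightarrow> bool" where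
  "reach W E a b \<longleftrightarrow> a \<in> W \<and> (\<lambda>x y. x \<in> W \<and> y \<in> W \<and> E x y)\<^sup>*\<^sup>* a b"

definition component :: "'a set \<Rightarrow> ('a \<Rightarrow> 'a \<Rightarrow> bool) \<Rightarrow> 'a \<Rightarrow> 'a set" where
  "component W E v = {u. reach W E v u}"

definition subgraph_of :: "'a set \<Rightarrow> ('a \<Rightarrow> 'a \<Rightarrow> bool) \<Rightarrow> 'a set \<Rightarrow> ('a \<Rightarrow> 'a \<Rightarrow> bool)
    \<Rightarrow> 'a set \<Rightarrow> bool" where
  "subgraph_of VH EH V E S \<longleftrightarrow> VH \<subseteq> S \<and> S \<subseteq> V \<and> (\<forall>u v. EH u v \<longrightarrow> EH v u)
     \<and> (\<forall>u v. EH u v \<longrightarrow> E u v \<and> u \<in> VH \<and> v \<in> VH)"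

definition certificate :: "'a set \<Rightarrow> ('a \<Rightarrow> 'a \<Rightarrow> bool) \<Rightarrow> 'a set \<Rightarrow> nat \<Rightarrow> bool" where
  "certificate VH EH XC z \<longleftrightarrow> bipartite_on EH (VH - XC) \<and> oct VH EH = card XC
     \<and> (\<forall>v\<in>VH. card (XC \<inter> component VH EH v) \<le> z)"

definition z_tight_OCC :: "'a set \<Rightarrow> ('a \<Rightarrow> 'a \<Rightarrow> bool) \<Rightarrow> nat \<Rightarrow> 'a set \<Rightarrow> 'a set \<Rightarrow> 'a set \<Rightarrow> bool" where
  "z_tight_OCC V E z AB AC AR \<longleftrightarrow> tight_OCC V E AB AC AR \<and>
     (\<exists>VH EH. subgraph_of VH EH V E (AB \<union> AC) \<and> certificate VH EH AC z)"

text \<open>Auxiliary graph: Inl u is the copy of u in X_B, Inr (v,i) is v^(i) for v in X_C.\<close>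
definition aux_V :: "'a set \<Rightarrow> 'a set \<Rightarrow> ('a + 'a \<times> bool) set" where
  "aux_V XB XC = Inl ` XB \<union> Inr ` (XC \<times> UNIV)"

definition aux_T :: "'a set \<Rightarrow> ('a + 'a \<times> bool) set" where
  "aux_T XC = Inr ` (XC \<times> UNIV)"

definition aux_E :: "('a \<Rightarrow> 'a \<Rightarrow> bool) \<Rightarrow> 'a set \<Rightarrow> 'a set \<Rightarrow> ('a \<Rightarrow> bool)
    \<Rightarrow> ('a + 'a \<times> bool) \<Rightarrow> ('a + 'a \<times> bool) \<Rightarrow> bool" where
  "aux_E E XB XC f x y \<longleftrightarrow>
     (\<exists>u w. x = Inl u \<and> y = Inl w \<and> u \<in> XB \<and> w \<in> XB \<and> E u w)
   \<or> (\<exists>v u. x = Inr (v, f u) \<and> y = Inl u \<and> v \<in> XC \<and> u \<in> XB \<and> E v u)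
   \<or> (\<exists>v u. y = Inr (v, f u) \<and> x = Inl u \<and> v \<in> XC \<and> u \<in> XB \<and> E v u)"

definition separates :: "'b set \<Rightarrow> ('b \<Rightarrow> 'b \<Rightarrow> bool) \<Rightarrow> 'b set \<Rightarrow> 'b set \<Rightarrow> 'b set \<Rightarrow> bool" where
  "separates W E X A B \<longleftrightarrow> \<not> (\<exists>a\<in>A. \<exists>b\<in>B. reach (W - X) E a b)"

definition sep3 :: "('a \<Rightarrow> 'a \<Rightarrow> bool) \<Rightarrow> 'a set \<Rightarrow> 'a set \<Rightarrow> ('a \<Rightarrow> bool)
    \<Rightarrow> ('a + 'a \<times> bool) set \<Rightarrow> ('a + 'a \<times> bool) set \<Rightarrow> ('a + 'a \<times> bool) set
    \<Rightarrow> ('a + 'a \<times> bool) set \<Rightarrow> 'a set \<Rightarrow> bool" where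
  "sep3 E XB XC f T1 T2 T3 TX S \<longleftrightarrow>
     (let W = aux_V XB XC - TX; Ea = aux_E E XB XC f; X = Inl ` S in
       separates W Ea X T1 T2 \<and> separates W Ea X T1 T3 \<and> separates W Ea X T2 T3)"

definition star_property :: "('a \<Rightarrow> 'a \<Rightarrow> bool) \<Rightarrow> 'a set \<Rightarrow> 'a set \<Rightarrow> ('a \<Rightarrow> bool)
    \<Rightarrow> 'a set \<Rightarrow> bool" where
  "star_property E XB XC f Bs \<longleftrightarrow> Bs \<subseteq> XB \<and>
    (\<forall>T1 T2 T3 TX. T1 \<union> T2 \<union> T3 \<union> TX = aux_T XC \<and>
        T1 \<inter> T2 = {} \<and> T1 \<inter> T3 = {} \<and> T1 \<inter> TX = {} \<and> T2 \<inter> T3 = {} \<and> T2 \<inter> TX = {}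
        \<and> T3 \<inter> TX = {} \<longrightarrow>
      (\<exists>S. S \<subseteq> XB \<and> card S \<le> card (aux_T XC) \<and> sep3 E XB XC f T1 T2 T3 TX S) \<longrightarrow>
      (\<exists>S. S \<subseteq> Bs \<and> sep3 E XB XC f T1 T2 T3 TX S \<and>
         (\<forall>S'. S' \<subseteq> XB \<and> sep3 E XB XC f T1 T2 T3 TX S' \<longrightarrow> card S \<le> card S')))"

end

theory Submission
  imports Defs
begin

lemma reach_in: "reach W E a b \<Longrightarrow> b \<in> W"
proof -
  assume "reach W E a b"
  then have a: "a \<in> W" and r: "(\<lambda>x y. x \<in> W \<and> y \<in> W \<and> E x y)\<^sup>*\<^sup>* a b" unfolding reach_def by auto
  from r show ?thesis
  proof (induction rule: rtranclp_induct)
    case base show ?case using a .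
  next
    case (step y z) then show ?case by simp
  qed
qed

lemma reach_refl: "a \<in> W \<Longrightarrow> reach W E a a"
  unfolding reach_def by auto

lemma reach_step: "reach W E a b \<Longrightarrow> E b c \<Longrightarrow> c \<in> W \<Longrightarrow> reach W E a c"
proof -
  assume r: "reach W E a b" and e: "E b c" and c: "c \<in> W"
  have b: "b \<in> W" using reach_in[OF r] .
  have r1: "(\<lambda>x y. x \<in> W \<and> y \<in> W \<and> E x y)\<^sup>*\<^sup>* a b" and a: "a \<in> W" using r unfolding reach_def by auto
  have r2: "(\<lambda>x y. x \<in> W \<and> y \<in> W \<and> E x y) b c" using b c e by simp
  show ?thesis unfolding reach_def using a rtranclp.rtrancl_into_rtrancl[OF r1 r2] by simp
qed

lemma reach_trans: "reach W E a b \<Longrightarrow> reach W E b c \<Longrightarrow> reach W E a c"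
  unfolding reach_def by (meson rtranclp_trans)

lemma reach_induct_inv:
  assumes "reach W E a b" "P a"
    and "\<And>x y. P x \<Longrightarrow> x \<in> W \<Longrightarrow> y \<in> W \<Longrightarrow> E x y \<Longrightarrow> P y"
  shows "P b"
  using assms(1) unfolding reach_def
proof -
  assume "a \<in> W \<and> (\<lambda>x y. x \<in> W \<and> y \<in> W \<and> E x y)\<^sup>*\<^sup>* a b"
  then have "(\<lambda>x y. x \<in> W \<and> y \<in> W \<and> E x y)\<^sup>*\<^sup>* a b" by auto
  then show "P b"
  proof (induction rule: rtranclp_induct)
    case base show ?case using assms(2) .
  next
    case (step y z) then show ?case using assms(3)[of y z] by blast
  qed
qed

lemma reach_sym:
  assumes "\<And>x y. E x y \<Longrightarrow> E y x" "reach W E a b"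
  shows "reach W E b a"
proof -
  have "b \<in> W" using reach_in assms(2) by metis
  have r: "(\<lambda>x y. x \<in> W \<and> y \<in> W \<and> E x y)\<^sup>*\<^sup>* a b" using assms(2) unfolding reach_def by auto
  have "(\<lambda>x y. x \<in> W \<and> y \<in> W \<and> E x y)\<^sup>*\<^sup>* b a"
    using r
  proof (induction rule: rtranclp_induct)
    case base then show ?case by auto
  next
    case (step y z)
    then have e: "(\<lambda>x y. x \<in> W \<and> y \<in> W \<and> E x y) z y" using assms(1) by auto
    show ?case by (rule converse_rtranclp_into_rtranclp[OF e step.IH])
  qed
  then show ?thesis unfolding reach_def using \<open>b \<in> W\<close> by auto
qed

lemma reach_mono: "W1 \<subseteq> W2 \<Longrightarrow> reach W1 E a b \<Longrightarrow> reach W2 E a b"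
proof -
  assume s: "W1 \<subseteq> W2" and r: "reach W1 E a b"
  then have r': "(\<lambda>x y. x \<in> W1 \<and> y \<in> W1 \<and> E x y)\<^sup>*\<^sup>* a b" "a \<in> W1" unfolding reach_def by auto
  have "(\<lambda>x y. x \<in> W2 \<and> y \<in> W2 \<and> E x y)\<^sup>*\<^sup>* a b"
    using r'(1) by (rule rtranclp_mono[THEN predicate2D, rotated]) (use s in auto)
  then show ?thesis using r'(2) s unfolding reach_def by auto
qed

lemma reach_restrict:
  assumes "reach W1 E a b" "\<And>x. reach W1 E a x \<Longrightarrow> x \<in> W2"
  shows "reach W2 E a b"
proof -
  have r: "(\<lambda>x y. x \<in> W1 \<and> y \<in> W1 \<and> E x y)\<^sup>*\<^sup>* a b" "a \<in> W1" using assms(1) unfolding reach_def by auto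
  have "reach W1 E a b \<and> reach W2 E a b" using r(1)
  proof (induction rule: rtranclp_induct)
    case base then show ?case using r(2) assms(2) reach_refl by metis
  next
    case (step y z)
    then have "reach W1 E a z" using reach_step by metis
    then show ?case using step assms(2) reach_step by metis
  qed
  then show ?thesis by auto
qed

lemma separates_sym:
  assumes "\<And>x y. E x y \<Longrightarrow> E y x"
  shows "separates W E X A B \<longleftrightarrow> separates W E X B A"
proof -
  have "\<And>a b. reach (W - X) E a b \<Longrightarrow> reach (W - X) E b a"
    by (rule reach_sym[where E=E]) (use assms in auto)
  then show ?thesis unfolding separates_def by blast
qed

definition nb :: "'b set \<Rightarrow> ('b \<Rightarrow> 'b \<Rightarrow> bool) \<Rightarrow> 'b set \<Rightarrow> 'b set" where
  "nb W E U = {w \<in> W - U. \<exists>u\<in>U. E u w}"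

lemma nb_stay:
  assumes "x \<in> U" "reach (W - nb W E U) E x z"
  shows "z \<in> U"
proof (rule reach_induct_inv[where P="\<lambda>z. z \<in> U", OF assms(2) assms(1)])
  fix x y assume "x \<in> U" "x \<in> W - nb W E U" "y \<in> W - nb W E U" "E x y"
  then show "y \<in> U" unfolding nb_def by blast
qed

lemma nb_cut:
  assumes "T1 \<subseteq> U" "U \<inter> T2 = {}"
  shows "separates W E (nb W E U) T1 T2"
  unfolding separates_def
proof
  assume "\<exists>a\<in>T1. \<exists>b\<in>T2. reach (W - nb W E U) E a b"
  then obtain a b where ab: "a \<in> T1" "b \<in> T2" "reach (W - nb W E U) E a b" by blast
  have "a \<in> U" using ab(1) assms(1) by blast
  then have "b \<in> U" using nb_stay[OF _ ab(3)] by blast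
  then show False using ab(2) assms(2) by blast
qed

lemma nb_submod:
  assumes "finite W"
  shows "card (nb W E (U \<inter> U')) + card (nb W E (U \<union> U')) \<le> card (nb W E U) + card (nb W E U')"
proof -
  let ?a = "nb W E (U \<inter> U')" and ?b = "nb W E (U \<union> U')" and ?c = "nb W E U" and ?d = "nb W E U'"
  have f: "finite ?a" "finite ?b" "finite ?c" "finite ?d" using assms unfolding nb_def by auto
  have s1: "?a \<union> ?b \<subseteq> ?c \<union> ?d" unfolding nb_def by blast
  have s2: "?a \<inter> ?b \<subseteq> ?c \<inter> ?d" unfolding nb_def by blast
  have "card ?a + card ?b = card (?a \<union> ?b) + card (?a \<inter> ?b)" using f card_Un_Int by metis
  also have "\<dots> \<le> card (?c \<union> ?d) + card (?c \<inter> ?d)"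
    using s1 s2 f by (intro add_mono card_mono) (simp_all add: finite_UnI)
  also have "\<dots> = card ?c + card ?d" using f card_Un_Int by metis
  finally show ?thesis .
qed

lemma nb_union_sub: "nb W E (U \<union> U') \<subseteq> nb W E U \<union> nb W E U'"
  unfolding nb_def by blast
lemma nb_inter_sub: "nb W E (U \<inter> U') \<subseteq> nb W E U \<union> nb W E U'"
  unfolding nb_def by blast

definition RS :: "'b set \<Rightarrow> ('b \<Rightarrow> 'b \<Rightarrow> bool) \<Rightarrow> 'b set \<Rightarrow> 'b set \<Rightarrow> 'b set" where
  "RS W E Q T = {b. \<exists>t\<in>T. reach (W - Q) E t b}"

lemma nb_RS_sub: "nb W E (RS W E Q T) \<subseteq> Q"
proof
  fix w assume "w \<in> nb W E (RS W E Q T)"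
  then have w: "w \<in> W" "w \<notin> RS W E Q T" and "\<exists>u\<in>RS W E Q T. E u w"
    unfolding nb_def by auto
  then obtain u where u: "u \<in> RS W E Q T" "E u w" by blast
  then obtain t where t: "t \<in> T" "reach (W - Q) E t u" unfolding RS_def by blast
  show "w \<in> Q"
  proof (rule ccontr)
    assume "w \<notin> Q"
    then have "reach (W - Q) E t w" using reach_step[OF t(2) u(2)] w(1) by blast
    then show False using w(2) t(1) unfolding RS_def by blast
  qed
qed

lemma sep_swap:
  assumes "\<And>x y. E x y \<Longrightarrow> E y x" "separates W E X A B"
  shows "separates W E X B A"
  using separates_sym[of E W X A B] assms by blast

lemma T_sub_RS:
  assumes "T \<subseteq> W" "T \<inter> Q = {}"
  shows "T \<subseteq> RS W E Q T"
proof
  fix t assume "t \<in> T"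
  then have "t \<in> W - Q" using assms by blast
  then have "reach (W - Q) E t t" by (rule reach_refl)
  then show "t \<in> RS W E Q T" unfolding RS_def using \<open>t \<in> T\<close> by blast
qed

lemma RS_T2:
  assumes "separates W E Q T1 T2"
  shows "RS W E Q T1 \<inter> T2 = {}"
  using assms unfolding separates_def RS_def by blast

lemma nb_RS_eq:
  assumes fin: "finite Q"
    and T1: "T1 \<subseteq> W" "T1 \<inter> Q = {}"
    and sep: "separates W E Q T1 T2"
    and minc: "\<And>Q'. Q' \<subseteq> D \<Longrightarrow> separates W E Q' T1 T2 \<Longrightarrow> k \<le> card Q'"
    and QD: "Q \<subseteq> D" and ck: "card Q \<le> k"
  shows "nb W E (RS W E Q T1) = Q"
proof -
  have sub: "nb W E (RS W E Q T1) \<subseteq> Q" by (rule nb_RS_sub)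
  have cut: "separates W E (nb W E (RS W E Q T1)) T1 T2"
    by (rule nb_cut[OF T_sub_RS[OF T1] RS_T2[OF sep]])
  have "k \<le> card (nb W E (RS W E Q T1))" using minc[OF _ cut] sub QD by blast
  then have "card (nb W E (RS W E Q T1)) = card Q" using ck card_mono[OF fin sub] by linarith
  then show ?thesis using card_subset_eq[OF fin sub] by blast
qed

lemma pure_cut:
  assumes fin: "finite W" and sym: "\<And>x y. E x y \<Longrightarrow> E y x"
    and T1W: "T1 \<subseteq> W" and T2W: "T2 \<subseteq> W" and DW: "D \<subseteq> W"
    and T1D: "T1 \<inter> D = {}" and T2D: "T2 \<inter> D = {}"
    and minc: "\<And>Q. Q \<subseteq> D \<Longrightarrow> separates W E Q T1 T2 \<Longrightarrow> k \<le> card Q"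
    and YD: "Y \<subseteq> D" and Ysep: "separates W E Y T1 T2" and Yk: "card Y \<le> k"
    and SD: "S \<subseteq> D" and Ssep: "separates W E S T1 T2" and Sk: "card S \<le> k"
    and yY: "y \<in> Y" and yS: "y \<notin> S"
  shows "\<exists>t \<in> T1 \<union> T2. reach (W - S) E t y"
proof (rule ccontr)
  assume nr: "\<not> (\<exists>t \<in> T1 \<union> T2. reach (W - S) E t y)"
  have finD: "finite D" using finite_subset[OF DW fin] .
  have finS: "finite S" "finite Y" using finite_subset[OF SD finD] finite_subset[OF YD finD] by auto
  have minc2: "\<And>Q. Q \<subseteq> D \<Longrightarrow> separates W E Q T2 T1 \<Longrightarrow> k \<le> card Q"
  proof -
    fix Q assume "Q \<subseteq> D" "separates W E Q T2 T1"
    then show "k \<le> card Q" using minc[OF _ sep_swap[OF sym]] by blast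
  qed
  have Ssep2: "separates W E S T2 T1" using sep_swap[OF sym Ssep] .
  define B1 where "B1 = RS W E S T1"
  define B2 where "B2 = RS W E S T2"
  define A1 where "A1 = RS W E Y T1"
  have nB1: "nb W E B1 = S" unfolding B1_def
    by (rule nb_RS_eq[OF finS(1) T1W _ Ssep minc SD Sk]) (use T1D SD in blast)
  have nB2: "nb W E B2 = S" unfolding B2_def
    by (rule nb_RS_eq[OF finS(1) T2W _ Ssep2 minc2 SD Sk]) (use T2D SD in blast)
  have nA1: "nb W E A1 = Y" unfolding A1_def
    by (rule nb_RS_eq[OF finS(2) T1W _ Ysep minc YD Yk]) (use T1D YD in blast)
  have T1A1: "T1 \<subseteq> A1" unfolding A1_def by (rule T_sub_RS[OF T1W]) (use T1D YD in blast)
  have T1B1: "T1 \<subseteq> B1" unfolding B1_def by (rule T_sub_RS[OF T1W]) (use T1D SD in blast)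
  have A1T2: "A1 \<inter> T2 = {}" unfolding A1_def by (rule RS_T2[OF Ysep])
  have B1T2: "B1 \<inter> T2 = {}" unfolding B1_def by (rule RS_T2[OF Ssep])
  have yB1: "y \<notin> B1" using nr unfolding B1_def RS_def by blast
  have yB2: "y \<notin> B2" using nr unfolding B2_def RS_def by blast
  have "y \<in> nb W E A1" using nA1 yY by simp
  then have yW: "y \<in> W" and yA1: "y \<notin> A1" and "\<exists>a\<in>A1. E a y" unfolding nb_def by auto
  then obtain a where a: "a \<in> A1" "E a y" by blast
  define U1 where "U1 = A1 \<union> B1"
  define S1 where "S1 = nb W E U1"
  have S1sub: "S1 \<subseteq> Y \<union> S" unfolding S1_def U1_def using nb_union_sub nA1 nB1 by metis
  have S1D: "S1 \<subseteq> D" using S1sub YD SD by blast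
  have S1cut: "separates W E S1 T1 T2" unfolding S1_def
    by (rule nb_cut) (use T1A1 A1T2 B1T2 in \<open>auto simp: U1_def\<close>)
  have Icut: "separates W E (nb W E (A1 \<inter> B1)) T1 T2"
    by (rule nb_cut) (use T1A1 T1B1 A1T2 in auto)
  have ID: "nb W E (A1 \<inter> B1) \<subseteq> D" using nb_inter_sub[of W E A1 B1] nA1 nB1 YD SD by blast
  have kI: "k \<le> card (nb W E (A1 \<inter> B1))" by (rule minc[OF ID Icut])
  have "card (nb W E (A1 \<inter> B1)) + card S1 \<le> card Y + card S"
    using nb_submod[OF fin, of E A1 B1] nA1 nB1 unfolding S1_def U1_def by simp
  then have cS1: "card S1 \<le> k" using kI Yk Sk by linarith
  have yS1: "y \<in> S1" unfolding S1_def U1_def nb_def using yW yA1 yB1 a by blast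
  define C2 where "C2 = RS W E S1 T2"
  have nC2sub: "nb W E C2 \<subseteq> S1" unfolding C2_def by (rule nb_RS_sub)
  have T2C2: "T2 \<subseteq> C2" unfolding C2_def by (rule T_sub_RS[OF T2W]) (use T2D S1D in blast)
  have S1cut2: "separates W E S1 T2 T1" using sep_swap[OF sym S1cut] .
  have C2T1: "C2 \<inter> T1 = {}" unfolding C2_def by (rule RS_T2[OF S1cut2])
  have C2cut: "separates W E (nb W E C2) T2 T1" by (rule nb_cut[OF T2C2 C2T1])
  have C2U1: "C2 \<inter> U1 = {}"
  proof (rule ccontr)
    assume "C2 \<inter> U1 \<noteq> {}"
    then obtain c t where c: "c \<in> U1" "t \<in> T2" "reach (W - S1) E t c" unfolding C2_def RS_def by blast
    have "reach (W - S1) E c t" by (rule reach_sym[OF sym c(3)])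
    then have "t \<in> U1" using nb_stay[OF c(1)] unfolding S1_def by blast
    then show False using c(2) A1T2 B1T2 unfolding U1_def by blast
  qed
  have SS1: "S \<subseteq> S1 \<union> U1"
  proof
    fix s assume "s \<in> S"
    then have "s \<in> nb W E B1" using nB1 by simp
    then have "s \<in> W" "\<exists>u\<in>B1. E u s" unfolding nb_def by auto
    then show "s \<in> S1 \<union> U1" unfolding S1_def nb_def U1_def by blast
  qed
  have C2W: "C2 \<subseteq> W - S"
  proof
    fix c assume "c \<in> C2"
    then obtain t where tt: "t \<in> T2" "reach (W - S1) E t c" unfolding C2_def RS_def by blast
    then have "c \<in> W - S1" using reach_in[OF tt(2)] by blast
    then show "c \<in> W - S" using SS1 C2U1 \<open>c \<in> C2\<close> by blast
  qed
  have ynC2: "y \<notin> nb W E C2"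
  proof
    assume "y \<in> nb W E C2"
    then obtain c where c: "c \<in> C2" "E c y" unfolding nb_def by blast
    then obtain t where t: "t \<in> T2" "reach (W - S1) E t c" unfolding C2_def RS_def by blast
    have rc: "reach (W - S) E t c"
    proof (rule reach_restrict[OF t(2)])
      fix x assume "reach (W - S1) E t x"
      then have "x \<in> C2" unfolding C2_def RS_def using t(1) by blast
      then show "x \<in> W - S" using C2W by blast
    qed
    have "y \<in> W - S" using yW yS by blast
    then have "reach (W - S) E t y" using reach_step[OF rc c(2)] by blast
    then show False using nr t(1) by blast
  qed
  have "nb W E C2 \<subseteq> S1 - {y}" using nC2sub ynC2 by blast
  moreover have "finite S1" using finite_subset[OF S1D finD] .
  ultimately have "card (nb W E C2) \<le> card S1 - 1"
    using card_mono[of "S1 - {y}"] yS1 by (simp add: card_Diff_singleton)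
  moreover have "k \<le> card (nb W E C2)"
  proof -
    have "nb W E C2 \<subseteq> D" using nC2sub S1D by blast
    then show ?thesis using minc[OF _ sep_swap[OF sym C2cut]] by blast
  qed
  moreover have "card S1 \<ge> 1" using yS1 \<open>finite S1\<close> card_0_eq by fastforce
  ultimately show False using cS1 by linarith
qed

lemma auxE_LL: "aux_E E XB XC f (Inl u) (Inl w) \<longleftrightarrow> u \<in> XB \<and> w \<in> XB \<and> E u w"
  unfolding aux_E_def by auto
lemma auxE_RL: "aux_E E XB XC f (Inr (v, i)) (Inl u) \<longleftrightarrow> i = f u \<and> v \<in> XC \<and> u \<in> XB \<and> E v u"
  unfolding aux_E_def by auto
lemma auxE_LR: "aux_E E XB XC f (Inl u) (Inr (v, i)) \<longleftrightarrow> i = f u \<and> v \<in> XC \<and> u \<in> XB \<and> E v u"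
  unfolding aux_E_def by auto
lemma auxE_RR: "\<not> aux_E E XB XC f (Inr p) (Inr q)"
  unfolding aux_E_def by auto

lemma auxE_sym:
  assumes "\<And>u v. E u v \<Longrightarrow> E v u" "aux_E E XB XC f x y"
  shows "aux_E E XB XC f y x"
  using assms unfolding aux_E_def by blast

lemma sep3_iff: "sep3 E XB XC f T1 T2 T3 TX S \<longleftrightarrow>
   separates (aux_V XB XC - TX) (aux_E E XB XC f) (Inl ` S) T1 T2 \<and>
   separates (aux_V XB XC - TX) (aux_E E XB XC f) (Inl ` S) T1 T3 \<and>
   separates (aux_V XB XC - TX) (aux_E E XB XC f) (Inl ` S) T2 T3"
  unfolding sep3_def Let_def by simp

lemma oct_le:
  assumes "finite U" "X \<subseteq> U" "proper_2col E (U - X) c"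
  shows "oct U E \<le> card X"
proof -
  have fin: "finite {card X | X. X \<subseteq> U \<and> bipartite_on E (U - X)}"
    using assms(1) by simp
  have "card X \<in> {card X | X. X \<subseteq> U \<and> bipartite_on E (U - X)}"
    using assms(2,3) unfolding bipartite_on_def by blast
  then show ?thesis unfolding oct_def using Min_le[OF fin] by blast
qed

lemma oct_attained:
  assumes "finite U"
  shows "\<exists>X \<subseteq> U. bipartite_on E (U - X) \<and> oct U E = card X"
proof -
  let ?M = "{card X | X. X \<subseteq> U \<and> bipartite_on E (U - X)}"
  have fin: "finite ?M" using assms by simp
  have "bipartite_on E (U - U)" unfolding bipartite_on_def proper_2col_def by simp
  then have ne: "?M \<noteq> {}" by blast
  have "Min ?M \<in> ?M" using Min_in[OF fin ne] .
  then show ?thesis unfolding oct_def by auto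
qed

lemma oct_sub:
  assumes "finite U" "VH \<subseteq> U" "\<And>u v. EH u v \<Longrightarrow> E u v"
  shows "oct VH EH \<le> oct U E"
proof -
  obtain X where X: "X \<subseteq> U" "bipartite_on E (U - X)" "oct U E = card X"
    using oct_attained[OF assms(1)] by blast
  obtain c where c: "proper_2col E (U - X) c" using X(2) unfolding bipartite_on_def by blast
  have "proper_2col EH (VH - (VH \<inter> X)) c"
    using c assms(2,3) unfolding proper_2col_def by blast
  moreover have "finite VH" using finite_subset[OF assms(2) assms(1)] .
  ultimately have "oct VH EH \<le> card (VH \<inter> X)"
    using oct_le[of VH "VH \<inter> X" EH c] by blast
  also have "\<dots> \<le> card X" using finite_subset[OF X(1) assms(1)] by (intro card_mono) auto
  finally show ?thesis using X(3) by simp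
qed

lemma comp_sub: "component VH EH v \<subseteq> VH"
  unfolding component_def using reach_in by fastforce

lemma comp_closed:
  assumes "x \<in> component VH EH v" "y \<in> VH" "EH x y"
  shows "y \<in> component VH EH v"
  using assms unfolding component_def using reach_step by fastforce

lemma comp_count:
  assumes fin: "finite VH" and sym: "\<And>x y. EH x y \<Longrightarrow> EH y x"
    and o: "oct VH EH = card Z1" and f1: "finite Z1"
    and c1: "proper_2col EH (VH - Z1) c1" and c2: "proper_2col EH (VH - Z2) c2"
  shows "card (Z1 \<inter> component VH EH v) \<le> card (Z2 \<inter> component VH EH v)"
proof -
  define K where "K = component VH EH v"
  have KV: "K \<subseteq> VH" unfolding K_def by (rule comp_sub)
  define Z where "Z = ((Z1 \<inter> VH) - K) \<union> (Z2 \<inter> K)"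
  define c where "c = (\<lambda>x. if x \<in> K then c2 x else c1 x)"
  have ZV: "Z \<subseteq> VH" unfolding Z_def using KV by blast
  have pc: "proper_2col EH (VH - Z) c"
    unfolding proper_2col_def
  proof (intro ballI impI)
    fix x y assume x: "x \<in> VH - Z" and y: "y \<in> VH - Z" and e: "EH x y"
    show "c x \<noteq> c y"
    proof (cases "x \<in> K")
      case True
      then have "y \<in> K" using comp_closed[of x VH EH v y] e y unfolding K_def by blast
      have "x \<in> VH - Z2" "y \<in> VH - Z2" using True \<open>y \<in> K\<close> x y unfolding Z_def by auto
      then have "c2 x \<noteq> c2 y" using c2 e unfolding proper_2col_def by blast
      then show ?thesis using True \<open>y \<in> K\<close> unfolding c_def by simp
    next
      case False
      have "y \<notin> K"
      proof
        assume "y \<in> K"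
        then have "x \<in> K" using comp_closed[of y VH EH v x] sym[OF e] x unfolding K_def by blast
        then show False using False by blast
      qed
      have "x \<in> VH - Z1" "y \<in> VH - Z1" using False \<open>y \<notin> K\<close> x y unfolding Z_def by auto
      then have "c1 x \<noteq> c1 y" using c1 e unfolding proper_2col_def by blast
      then show ?thesis using False \<open>y \<notin> K\<close> unfolding c_def by simp
    qed
  qed
  have finK: "finite K" using finite_subset[OF KV fin] .
  have "card Z1 \<le> card Z" using o oct_le[OF fin ZV pc] by simp
  also have "\<dots> \<le> card ((Z1 \<inter> VH) - K) + card (Z2 \<inter> K)" unfolding Z_def by (rule card_Un_le)
  also have "\<dots> \<le> card (Z1 - K) + card (Z2 \<inter> K)"
    using f1 finK by (intro add_mono card_mono) auto
  finally have a: "card Z1 \<le> card (Z1 - K) + card (Z2 \<inter> K)" .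
  have "card Z1 = card (Z1 - K) + card (Z1 \<inter> K)"
    using card_Int_Diff[OF f1, of K] by simp
  then show ?thesis using a unfolding K_def by linarith
qed

locale ctx =
  fixes V :: "'a set" and E :: "'a \<Rightarrow> 'a \<Rightarrow> bool" and XB XC XR :: "'a set" and f :: "'a \<Rightarrow> bool"
    and AB AC AR :: "'a set" and g :: "'a \<Rightarrow> bool"
  assumes finV: "finite V" and Esym: "\<And>u v. E u v \<Longrightarrow> E v u"
    and XU: "XB \<union> XC \<union> XR = V" and XBC: "XB \<inter> XC = {}" and XBR: "XB \<inter> XR = {}" and XCR: "XC \<inter> XR = {}"
    and XBRe: "\<And>u v. u \<in> XB \<Longrightarrow> v \<in> XR \<Longrightarrow> \<not> E u v"
    and fprop: "\<And>u w. u \<in> XB \<Longrightarrow> w \<in> XB \<Longrightarrow> E u w \<Longrightarrow> f u \<noteq> f w"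
    and AU: "AB \<union> AC \<union> AR = V" and ABC: "AB \<inter> AC = {}" and ABR: "AB \<inter> AR = {}" and ACR: "AC \<inter> AR = {}"
    and ABRe: "\<And>u v. u \<in> AB \<Longrightarrow> v \<in> AR \<Longrightarrow> \<not> E u v"
    and gprop: "\<And>u w. u \<in> AB \<Longrightarrow> w \<in> AB \<Longrightarrow> E u w \<Longrightarrow> g u \<noteq> g w"
    and tightA: "card AC = oct (AB \<union> AC) E"
begin

definition "Y = AC \<inter> XB"
definition T1 :: "('a + 'a \<times> bool) set" where "T1 = (\<lambda>v. Inr (v, g v)) ` (XC \<inter> AB)"
definition T2 :: "('a + 'a \<times> bool) set" where "T2 = (\<lambda>v. Inr (v, \<not> g v)) ` (XC \<inter> AB)"
definition T3 :: "('a + 'a \<times> bool) set" where "T3 = Inr ` ((XC \<inter> AR) \<times> UNIV)"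
definition TX :: "('a + 'a \<times> bool) set" where "TX = Inr ` ((XC \<inter> AC) \<times> UNIV)"
definition "Ea = aux_E E XB XC f"
definition "Wg = aux_V XB XC - TX"
definition "AA = (AB \<union> AC) \<inter> XB"
definition "Wp = Inl ` AA \<union> T1 \<union> T2"

lemma T1_Inr[simp]: "Inr (v, i) \<in> T1 \<longleftrightarrow> v \<in> XC \<and> v \<in> AB \<and> i = g v"
  unfolding T1_def by auto
lemma T2_Inr[simp]: "Inr (v, i) \<in> T2 \<longleftrightarrow> v \<in> XC \<and> v \<in> AB \<and> i = (\<not> g v)"
  unfolding T2_def by auto
lemma T3_Inr[simp]: "Inr (v, i) \<in> T3 \<longleftrightarrow> v \<in> XC \<and> v \<in> AR"
  unfolding T3_def by auto
lemma TX_Inr[simp]: "Inr (v, i) \<in> TX \<longleftrightarrow> v \<in> XC \<and> v \<in> AC"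
  unfolding TX_def by auto
lemma T_Inl[simp]: "Inl u \<notin> T1" "Inl u \<notin> T2" "Inl u \<notin> T3" "Inl u \<notin> TX"
  unfolding T1_def T2_def T3_def TX_def by auto
lemma Wg_Inl[simp]: "Inl u \<in> Wg \<longleftrightarrow> u \<in> XB"
  unfolding Wg_def aux_V_def by auto
lemma Wg_Inr[simp]: "Inr (v, i) \<in> Wg \<longleftrightarrow> v \<in> XC \<and> v \<notin> AC"
  unfolding Wg_def aux_V_def by auto
lemma Wp_Inl[simp]: "Inl u \<in> Wp \<longleftrightarrow> u \<in> AA"
  unfolding Wp_def by auto
lemma Wp_Inr[simp]: "Inr (v, i) \<in> Wp \<longleftrightarrow> v \<in> XC \<and> v \<in> AB"
  unfolding Wp_def by (cases i; auto)

lemma Ea_LL[simp]: "Ea (Inl u) (Inl w) \<longleftrightarrow> u \<in> XB \<and> w \<in> XB \<and> E u w"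
  unfolding Ea_def by (rule auxE_LL)
lemma Ea_RL[simp]: "Ea (Inr (v, i)) (Inl u) \<longleftrightarrow> i = f u \<and> v \<in> XC \<and> u \<in> XB \<and> E v u"
  unfolding Ea_def by (rule auxE_RL)
lemma Ea_LR[simp]: "Ea (Inl u) (Inr (v, i)) \<longleftrightarrow> i = f u \<and> v \<in> XC \<and> u \<in> XB \<and> E v u"
  unfolding Ea_def by (rule auxE_LR)
lemma Ea_RR[simp]: "\<not> Ea (Inr p) (Inr q)"
  unfolding Ea_def by (rule auxE_RR)
lemma Ea_sym: "Ea x y \<Longrightarrow> Ea y x"
  unfolding Ea_def by (rule auxE_sym[OF Esym])

lemma inV: "x \<in> V \<Longrightarrow> x \<in> AB \<or> x \<in> AC \<or> x \<in> AR"
  using AU by blast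
lemma XB_V: "XB \<subseteq> V" and XC_V: "XC \<subseteq> V" and XR_V: "XR \<subseteq> V" using XU by auto

lemma Y_XB: "Y \<subseteq> XB" and Y_AC: "Y \<subseteq> AC" unfolding Y_def by auto

lemma step_LL:
  assumes "u \<in> AB" "w \<in> XB" "E u w" "w \<notin> Y"
  shows "w \<in> AB"
proof -
  have "w \<in> V" using assms(2) XB_V by blast
  then show ?thesis using inV[of w] ABRe[OF assms(1)] assms(3,4) Y_def assms(2) by blast
qed

lemma step_LR:
  assumes "u \<in> AB" "v \<in> V" "E v u" "v \<notin> AC"
  shows "v \<in> AB"
  using inV[OF assms(2)] ABRe[OF assms(1)] Esym[OF assms(3)] assms(4) by blast

definition J :: "bool \<Rightarrow> 'a + 'a \<times> bool \<Rightarrow> bool" where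
  "J p x \<longleftrightarrow> (\<exists>u. x = Inl u \<and> u \<in> AB \<and> u \<in> XB \<and> (f u = g u) = (\<not> p))
           \<or> (\<exists>v i. x = Inr (v, i) \<and> v \<in> AB \<and> v \<in> XC \<and> (i = g v) = p)"

lemma J_step:
  assumes "J p x" "x \<in> Wg - Inl ` Y" "y \<in> Wg - Inl ` Y" "Ea x y"
  shows "J p y"
proof (cases x)
  case (Inl u)
  then have u: "u \<in> AB" "u \<in> XB" "(f u = g u) = (\<not> p)" using assms(1) unfolding J_def by auto
  show ?thesis
  proof (cases y)
    case (Inl w)
    then have w: "w \<in> XB" "E u w" "w \<notin> Y" using assms(3,4) \<open>x = Inl u\<close> by auto
    have wAB: "w \<in> AB" using step_LL[OF u(1) w] .
    have "f u \<noteq> f w" using fprop[OF u(2) w(1) w(2)] .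
    moreover have "g u \<noteq> g w" using gprop[OF u(1) wAB w(2)] .
    ultimately have "(f w = g w) = (\<not> p)" using u(3) by auto
    then show ?thesis unfolding J_def using Inl wAB w(1) by auto
  next
    case (Inr q)
    then obtain v i where q: "y = Inr (v, i)" by (cases q) auto
    then have vi: "i = f u" "v \<in> XC" "E v u" "v \<notin> AC" using assms(3,4) \<open>x = Inl u\<close> by auto
    have vAB: "v \<in> AB" using step_LR[OF u(1) _ vi(3) vi(4)] vi(2) XC_V by blast
    have "g v \<noteq> g u" using gprop[OF vAB u(1) vi(3)] .
    then have "(i = g v) = p" using vi(1) u(3) by auto
    then show ?thesis unfolding J_def using q vAB vi(2) by auto
  qed
next
  case (Inr q)
  then obtain v i where q: "x = Inr (v, i)" by (cases q) auto
  then have v: "v \<in> AB" "v \<in> XC" "(i = g v) = p" using assms(1) unfolding J_def by auto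
  show ?thesis
  proof (cases y)
    case (Inl u)
    then have ui: "i = f u" "u \<in> XB" "E v u" "u \<notin> Y" using assms(3,4) q by auto
    have uAB: "u \<in> AB" using step_LL[OF v(1) ui(2) ui(3) ui(4)] .
    have "g u \<noteq> g v" using gprop[OF uAB v(1) Esym[OF ui(3)]] .
    then have "(f u = g u) = (\<not> p)" using ui(1) v(3) by auto
    then show ?thesis unfolding J_def using Inl uAB ui(2) by auto
  next
    case (Inr q')
    then show ?thesis using assms(4) q by (cases q') auto
  qed
qed

lemma J_reach:
  assumes "reach (Wg - Inl ` Y) Ea a b" "J p a"
  shows "J p b"
  by (rule reach_induct_inv[where P="J p", OF assms]) (rule J_step)

lemma J_T1: "t \<in> T1 \<Longrightarrow> J True t" unfolding T1_def J_def by auto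
lemma J_T2: "t \<in> T2 \<Longrightarrow> J False t" unfolding T2_def J_def by auto
lemma J_T1n: "t \<in> T1 \<Longrightarrow> \<not> J False t" unfolding T1_def J_def by auto
lemma J_T2n: "t \<in> T2 \<Longrightarrow> \<not> J True t" unfolding T2_def J_def by auto
lemma J_T3n: "t \<in> T3 \<Longrightarrow> \<not> J p t" unfolding T3_def J_def using ABR by auto

lemma Ysep: "sep3 E XB XC f T1 T2 T3 TX Y"
  unfolding sep3_iff Wg_def[symmetric] Ea_def[symmetric] separates_def
  using J_reach J_T1 J_T2 J_T1n J_T2n J_T3n by metis

lemma finAC: "finite AC" and finAB: "finite AB" and finXB: "finite XB" and finXC: "finite XC"
  using finite_subset[OF _ finV] AU XU by blast+

lemma card_AC_Y: "card AC = card (AC - Y) + card Y"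
proof -
  have "card (AC - Y) = card AC - card Y" using card_Diff_subset[OF finite_subset[OF Y_AC finAC] Y_AC] .
  moreover have "card Y \<le> card AC" using card_mono[OF finAC Y_AC] .
  ultimately show ?thesis by linarith
qed

lemma aux_T_mem: "x \<in> aux_T XC \<longleftrightarrow> (\<exists>v i. x = Inr (v, i) \<and> v \<in> XC)"
  unfolding aux_T_def by auto

lemma Ycard: "card Y \<le> card (aux_T XC)"
proof -
  have finU: "finite (AB \<union> AC)" using finAB finAC by blast
  define Z0 where "Z0 = (AC - Y) \<union> (XC \<inter> AB)"
  define c0 where "c0 = (\<lambda>u. if u \<in> XB then f u else g u)"
  have Z0U: "Z0 \<subseteq> AB \<union> AC" unfolding Z0_def by blast
  have mem: "\<And>u. u \<in> (AB \<union> AC) - Z0 \<Longrightarrow> (u \<in> AB \<and> u \<notin> XC) \<or> u \<in> Y"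
    unfolding Z0_def by blast
  have mixed: "\<And>u w. u \<in> (AB \<union> AC) - Z0 \<Longrightarrow> w \<in> (AB \<union> AC) - Z0 \<Longrightarrow> u \<in> XB \<Longrightarrow> w \<notin> XB \<Longrightarrow> \<not> E u w"
  proof -
    fix u w assume u: "u \<in> (AB \<union> AC) - Z0" and w: "w \<in> (AB \<union> AC) - Z0" and "u \<in> XB" "w \<notin> XB"
    then have "w \<in> AB" "w \<notin> XC" using mem[OF w] Y_XB by auto
    then have "w \<in> XR" using \<open>w \<notin> XB\<close> XU AU by blast
    then show "\<not> E u w" using XBRe[OF \<open>u \<in> XB\<close>] by blast
  qed
  have pc: "proper_2col E ((AB \<union> AC) - Z0) c0"
    unfolding proper_2col_def
  proof (intro ballI impI)
    fix u w assume u: "u \<in> (AB \<union> AC) - Z0" and w: "w \<in> (AB \<union> AC) - Z0" and e: "E u w"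
    show "c0 u \<noteq> c0 w"
    proof (cases "u \<in> XB")
      case True
      show ?thesis
      proof (cases "w \<in> XB")
        case True
        then show ?thesis using fprop[OF \<open>u \<in> XB\<close> True e] unfolding c0_def using \<open>u \<in> XB\<close> by simp
      next
        case False
        then show ?thesis using mixed[OF u w \<open>u \<in> XB\<close> False] e by blast
      qed
    next
      case False
      show ?thesis
      proof (cases "w \<in> XB")
        case True
        then show ?thesis using mixed[OF w u True False] Esym[OF e] by blast
      next
        case wF: False
        have "u \<in> AB" "w \<in> AB" using mem[OF u] mem[OF w] False wF Y_XB by auto
        then show ?thesis using gprop[OF _ _ e] False wF unfolding c0_def by simp
      qed
    qed
  qed
  have "card AC \<le> card Z0" using tightA oct_le[OF finU Z0U pc] by simp
  also have "\<dots> \<le> card (AC - Y) + card (XC \<inter> AB)" unfolding Z0_def by (rule card_Un_le)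
  finally have "card Y \<le> card (XC \<inter> AB)" using card_AC_Y by linarith
  also have "\<dots> \<le> card XC" using finXC by (intro card_mono) auto
  also have "\<dots> \<le> card (aux_T XC)"
  proof -
    have inj: "inj_on (\<lambda>v. Inr (v, True) :: 'a + 'a \<times> bool) XC" by (auto simp: inj_on_def)
    have sub: "(\<lambda>v. Inr (v, True)) ` XC \<subseteq> aux_T XC" unfolding aux_T_def by auto
    have fin: "finite (aux_T XC)" unfolding aux_T_def using finXC by simp
    show ?thesis using card_inj_on_le[OF inj sub fin] .
  qed
  finally show ?thesis .
qed

lemma part:
  "T1 \<union> T2 \<union> T3 \<union> TX = aux_T XC \<and> T1 \<inter> T2 = {} \<and> T1 \<inter> T3 = {} \<and> T1 \<inter> TX = {} \<and>
   T2 \<inter> T3 = {} \<and> T2 \<inter> TX = {} \<and> T3 \<inter> TX = {}"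
proof -
  have inr: "\<And>x. x \<in> T1 \<union> T2 \<union> T3 \<union> TX \<Longrightarrow> \<exists>p. x = Inr p"
    unfolding T1_def T2_def T3_def TX_def by auto
  have e1: "T1 \<union> T2 \<union> T3 \<union> TX \<subseteq> aux_T XC"
  proof
    fix x assume x: "x \<in> T1 \<union> T2 \<union> T3 \<union> TX"
    then obtain v i where "x = Inr (v, i)" using inr by fastforce
    then show "x \<in> aux_T XC" using x unfolding aux_T_mem by auto
  qed
  have e2: "aux_T XC \<subseteq> T1 \<union> T2 \<union> T3 \<union> TX"
  proof
    fix x assume "x \<in> aux_T XC"
    then obtain v i where x: "x = Inr (v, i)" "v \<in> XC" unfolding aux_T_mem by blast
    then have "v \<in> AB \<or> v \<in> AC \<or> v \<in> AR" using inV XC_V by blast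
    then show "x \<in> T1 \<union> T2 \<union> T3 \<union> TX" using x by (cases i; cases "g v") auto
  qed
  have d: "\<And>x. x \<in> T1 \<union> T2 \<union> T3 \<union> TX \<Longrightarrow> 
      (x \<in> T1 \<longrightarrow> x \<notin> T2 \<and> x \<notin> T3 \<and> x \<notin> TX) \<and> (x \<in> T2 \<longrightarrow> x \<notin> T3 \<and> x \<notin> TX) \<and> (x \<in> T3 \<longrightarrow> x \<notin> TX)"
  proof -
    fix x assume x: "x \<in> T1 \<union> T2 \<union> T3 \<union> TX"
    then obtain v i where "x = Inr (v, i)" using inr by fastforce
    then show "(x \<in> T1 \<longrightarrow> x \<notin> T2 \<and> x \<notin> T3 \<and> x \<notin> TX) \<and> (x \<in> T2 \<longrightarrow> x \<notin> T3 \<and> x \<notin> TX) \<and> (x \<in> T3 \<longrightarrow> x \<notin> TX)"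
      using ABC ABR ACR by auto
  qed
  show ?thesis using e1 e2 d by blast
qed

lemma Exch:
  assumes QA: "Q \<subseteq> AA" and sep: "separates Wp Ea (Inl ` Q) T1 T2"
  shows "card Y \<le> card Q"
proof -
  have finU: "finite (AB \<union> AC)" using finAB finAC by blast
  define R where "R = (\<lambda>u. \<exists>t\<in>T1. reach (Wp - Inl ` Q) Ea t (Inl u))"
  define c where "c = (\<lambda>u. if u \<in> XB then (f u \<noteq> R u) else g u)"
  define Z where "Z = (AC - Y) \<union> Q"
  have ZU: "Z \<subseteq> AB \<union> AC" unfolding Z_def using QA AA_def by blast
  have mem: "\<And>u. u \<in> (AB \<union> AC) - Z \<Longrightarrow> u \<notin> Q \<and> (u \<in> AB \<or> u \<in> Y)"
    unfolding Z_def by blast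
  have inW: "\<And>u. u \<in> (AB \<union> AC) - Z \<Longrightarrow> u \<in> XB \<Longrightarrow> Inl u \<in> Wp - Inl ` Q"
    using mem by (auto simp: AA_def)
  have mixed: "\<And>u w. u \<in> (AB \<union> AC) - Z \<Longrightarrow> w \<in> (AB \<union> AC) - Z \<Longrightarrow> u \<in> XB \<Longrightarrow> w \<notin> XB \<Longrightarrow> E u w
     \<Longrightarrow> c u \<noteq> c w"
  proof -
    fix u w assume u: "u \<in> (AB \<union> AC) - Z" and w: "w \<in> (AB \<union> AC) - Z" and uB: "u \<in> XB"
      and wB: "w \<notin> XB" and e: "E u w"
    have wAB: "w \<in> AB" using mem[OF w] wB Y_XB by auto
    have "w \<notin> XR" using XBRe[OF uB] e by blast
    then have wC: "w \<in> XC" using wB wAB AU XU by blast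
    have iu: "Inl u \<in> Wp - Inl ` Q" using inW[OF u uB] .
    define p where "p = (Inr (w, f u) :: 'a + 'a \<times> bool)"
    have pW: "p \<in> Wp - Inl ` Q" unfolding p_def using wC wAB by auto
    have ep: "Ea p (Inl u)" unfolding p_def using wC uB Esym[OF e] by simp
    have rp: "reach (Wp - Inl ` Q) Ea p (Inl u)" using reach_step[OF reach_refl[where E=Ea, OF pW] ep iu] .
    show "c u \<noteq> c w"
    proof (cases "f u = g w")
      case True
      then have "p \<in> T1" unfolding p_def using wC wAB by simp
      then have "R u" unfolding R_def using rp by blast
      then show ?thesis unfolding c_def using uB wB True by simp
    next
      case False
      then have pT2: "p \<in> T2" unfolding p_def using wC wAB by simp
      have "\<not> R u"
      proof
        assume "R u"
        then obtain t where t: "t \<in> T1" "reach (Wp - Inl ` Q) Ea t (Inl u)" unfolding R_def by blast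
        have "reach (Wp - Inl ` Q) Ea t p" using reach_step[OF t(2) Ea_sym[OF ep] pW] .
        then show False using sep t(1) pT2 unfolding separates_def by blast
      qed
      then show ?thesis unfolding c_def using uB wB False by simp
    qed
  qed
  have pc: "proper_2col E ((AB \<union> AC) - Z) c"
    unfolding proper_2col_def
  proof (intro ballI impI)
    fix u w assume u: "u \<in> (AB \<union> AC) - Z" and w: "w \<in> (AB \<union> AC) - Z" and e: "E u w"
    show "c u \<noteq> c w"
    proof (cases "u \<in> XB")
      case uB: True
      show ?thesis
      proof (cases "w \<in> XB")
        case wB: True
        have iu: "Inl u \<in> Wp - Inl ` Q" and iw: "Inl w \<in> Wp - Inl ` Q" using inW u w uB wB by auto
        have e1: "Ea (Inl u) (Inl w)" and e2: "Ea (Inl w) (Inl u)" using uB wB e Esym[OF e] by auto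
        have "R u \<longleftrightarrow> R w"
        proof
          assume "R u"
          then obtain t where t: "t \<in> T1" "reach (Wp - Inl ` Q) Ea t (Inl u)" unfolding R_def by blast
          show "R w" unfolding R_def using reach_step[OF t(2) e1 iw] t(1) by blast
        next
          assume "R w"
          then obtain t where t: "t \<in> T1" "reach (Wp - Inl ` Q) Ea t (Inl w)" unfolding R_def by blast
          show "R u" unfolding R_def using reach_step[OF t(2) e2 iu] t(1) by blast
        qed
        then show ?thesis using fprop[OF uB wB e] unfolding c_def using uB wB by auto
      next
        case wB: False
        show ?thesis using mixed[OF u w uB wB e] .
      qed
    next
      case uB: False
      show ?thesis
      proof (cases "w \<in> XB")
        case wB: True
        show ?thesis using mixed[OF w u wB uB Esym[OF e]] by simp
      next
        case wB: False
        have "u \<in> AB" "w \<in> AB" using mem[OF u] mem[OF w] uB wB Y_XB by auto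
        then show ?thesis using gprop[OF _ _ e] uB wB unfolding c_def by simp
      qed
    qed
  qed
  have "card AC \<le> card Z" using tightA oct_le[OF finU ZU pc] by simp
  also have "\<dots> \<le> card (AC - Y) + card Q" unfolding Z_def by (rule card_Un_le)
  finally show ?thesis using card_AC_Y by linarith
qed

end

locale ctx2 = ctx +
  fixes S :: "'a set" and VH :: "'a set" and EH :: "'a \<Rightarrow> 'a \<Rightarrow> bool" and z :: nat
  assumes SXB: "S \<subseteq> XB" and Ssep: "sep3 E XB XC f T1 T2 T3 TX S" and SY: "card S \<le> card Y"
    and Yne: "Y \<noteq> {}"
    and sub: "subgraph_of VH EH V E (AB \<union> AC)" and cert: "certificate VH EH AC z"
begin

lemma S12: "separates Wg Ea (Inl ` S) T1 T2" and S13: "separates Wg Ea (Inl ` S) T1 T3"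
  and S23: "separates Wg Ea (Inl ` S) T2 T3"
  using Ssep unfolding sep3_iff Wg_def[symmetric] Ea_def[symmetric] by auto

lemma Y12: "separates Wg Ea (Inl ` Y) T1 T2"
  using Ysep unfolding sep3_iff Wg_def[symmetric] Ea_def[symmetric] by auto

lemma Wp_Wg: "Wp \<subseteq> Wg"
proof
  fix x assume x: "x \<in> Wp"
  show "x \<in> Wg"
  proof (cases x)
    case (Inl u) then show ?thesis using x by (auto simp: AA_def)
  next
    case (Inr q)
    then obtain v i where "x = Inr (v, i)" by (cases q) auto
    then show ?thesis using x ABC by auto
  qed
qed

lemma sep_Wp:
  assumes "separates Wg Ea (Inl ` X) T1 T2"
  shows "separates Wp Ea (Inl ` X) T1 T2"
  using assms reach_mono[of "Wp - Inl ` X" "Wg - Inl ` X" Ea] Wp_Wg unfolding separates_def by blast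

lemma finS: "finite S" using finite_subset[OF SXB finXB] .

lemma S_AA: "S \<subseteq> AA" and cardS: "card S = card Y"
proof -
  have sepWp: "separates Wp Ea (Inl ` (S \<inter> AA)) T1 T2"
  proof -
    have "Wp - Inl ` (S \<inter> AA) = Wp - Inl ` S" by (auto simp: Wp_def)
    then show ?thesis using sep_Wp[OF S12] unfolding separates_def by simp
  qed
  have "card Y \<le> card (S \<inter> AA)" using Exch[OF _ sepWp] by blast
  moreover have "card (S \<inter> AA) \<le> card S" using card_mono[OF finS] by blast
  ultimately have eq: "card (S \<inter> AA) = card S" using SY by linarith
  then have "S \<inter> AA = S" using card_subset_eq[OF finS, of "S \<inter> AA"] by blast
  then show "S \<subseteq> AA" by blast
  show "card S = card Y" using eq SY \<open>card Y \<le> card (S \<inter> AA)\<close> by linarith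
qed

lemma Y_AA: "Y \<subseteq> AA" unfolding Y_def AA_def by blast

lemma finWp: "finite Wp"
  unfolding Wp_def T1_def T2_def AA_def using finXB finXC by auto

lemma reach_Y:
  assumes "y \<in> Y" "y \<notin> S"
  shows "\<exists>t \<in> T1 \<union> T2. reach (Wg - Inl ` S) Ea t (Inl y)"
proof -
  have minc: "\<And>Q. Q \<subseteq> Inl ` AA \<Longrightarrow> separates Wp Ea Q T1 T2 \<Longrightarrow> card Y \<le> card Q"
  proof -
    fix Q assume Q: "Q \<subseteq> Inl ` AA" "separates Wp Ea Q T1 T2"
    define Q0 where "Q0 = {u. Inl u \<in> Q}"
    have QQ: "Q = Inl ` Q0" unfolding Q0_def using Q(1) by auto
    have "Q0 \<subseteq> AA" unfolding Q0_def using Q(1) by auto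
    then have "card Y \<le> card Q0" using Exch Q(2) QQ by blast
    moreover have "card Q = card Q0" unfolding QQ by (rule card_image) (simp add: inj_on_def)
    ultimately show "card Y \<le> card Q" by simp
  qed
  have cY: "card (Inl ` Y :: ('a + 'a \<times> bool) set) = card Y" by (rule card_image) (simp add: inj_on_def)
  have cS: "card (Inl ` S :: ('a + 'a \<times> bool) set) = card S" by (rule card_image) (simp add: inj_on_def)
  have "\<exists>t \<in> T1 \<union> T2. reach (Wp - Inl ` S) Ea t (Inl y)"
  proof (rule pure_cut[where D="Inl ` AA" and k="card Y" and Y="Inl ` Y"])
    show "finite Wp" by (rule finWp)
    show "\<And>x y. Ea x y \<Longrightarrow> Ea y x" by (rule Ea_sym)
    show "T1 \<subseteq> Wp" "T2 \<subseteq> Wp" "Inl ` AA \<subseteq> Wp" unfolding Wp_def by auto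
    show "T1 \<inter> Inl ` AA = {}" "T2 \<inter> Inl ` AA = {}" unfolding T1_def T2_def by auto
    show "\<And>Q. Q \<subseteq> Inl ` AA \<Longrightarrow> separates Wp Ea Q T1 T2 \<Longrightarrow> card Y \<le> card Q" by (rule minc)
    show "Inl ` Y \<subseteq> Inl ` AA" using Y_AA by blast
    show "separates Wp Ea (Inl ` Y) T1 T2" by (rule sep_Wp[OF Y12])
    show "card (Inl ` Y :: ('a + 'a \<times> bool) set) \<le> card Y" using cY by simp
    show "Inl ` S \<subseteq> Inl ` AA" using S_AA by blast
    show "separates Wp Ea (Inl ` S) T1 T2" by (rule sep_Wp[OF S12])
    show "card (Inl ` S :: ('a + 'a \<times> bool) set) \<le> card Y" using cS SY by simp
    show "Inl y \<in> Inl ` Y" using assms by blast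
    show "Inl y \<notin> Inl ` S" using assms by blast
  qed
  then obtain t where t: "t \<in> T1 \<union> T2" "reach (Wp - Inl ` S) Ea t (Inl y)" by blast
  have "reach (Wg - Inl ` S) Ea t (Inl y)" using reach_mono[OF _ t(2)] Wp_Wg by blast
  then show ?thesis using t(1) by blast
qed

definition Rg :: "'a + 'a \<times> bool \<Rightarrow> bool" where
  "Rg x \<longleftrightarrow> (\<exists>w. x = Inl w \<and> w \<in> AR) \<or> (\<exists>v i. x = Inr (v, i) \<and> v \<in> AR)"

lemma noR3:
  assumes u: "u \<in> AA" "u \<notin> S" and t3: "t3 \<in> T3"
  shows "\<not> reach (Wg - Inl ` S) Ea t3 (Inl u)"
proof
  assume r: "reach (Wg - Inl ` S) Ea t3 (Inl u)"
  let ?W = "Wg - Inl ` S"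
  define P where "P = (\<lambda>x. reach ?W Ea t3 x \<and> (Rg x \<or> (\<exists>y\<in>Y. y \<notin> S \<and> reach ?W Ea t3 (Inl y))))"
  obtain v0 i0 where t3e: "t3 = Inr (v0, i0)" "v0 \<in> XC" "v0 \<in> AR" using t3 unfolding T3_def by auto
  have t3W: "t3 \<in> ?W" using t3e ACR by auto
  have P0: "P t3" unfolding P_def Rg_def using reach_refl[OF t3W] t3e by blast
  have Pstep: "\<And>x y. P x \<Longrightarrow> x \<in> ?W \<Longrightarrow> y \<in> ?W \<Longrightarrow> Ea x y \<Longrightarrow> P y"
  proof -
    fix x y assume Px: "P x" and xW: "x \<in> ?W" and yW: "y \<in> ?W" and e: "Ea x y"
    have rx: "reach ?W Ea t3 x" using Px unfolding P_def by blast
    have ry: "reach ?W Ea t3 y" using reach_step[OF rx e yW] .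
    show "P y"
    proof (cases "\<exists>y\<in>Y. y \<notin> S \<and> reach ?W Ea t3 (Inl y)")
      case True then show ?thesis unfolding P_def using ry by blast
    next
      case False
      then have Rx: "Rg x" using Px unfolding P_def by blast
      show ?thesis
      proof (cases x)
        case (Inl w)
        then have wAR: "w \<in> AR" using Rx unfolding Rg_def by auto
        show ?thesis
        proof (cases y)
          case (Inl w')
          then have w': "w' \<in> XB" "E w w'" "w' \<notin> S" using e yW \<open>x = Inl w\<close> by auto
          have "w' \<in> V" using w'(1) XB_V by blast
          moreover have "w' \<notin> AB" using ABRe[of w' w] wAR Esym[OF w'(2)] by blast
          moreover have "w' \<notin> AC" using False w' ry Inl unfolding Y_def by blast
          ultimately have "w' \<in> AR" using inV by blast
          then show ?thesis unfolding P_def Rg_def using ry Inl by blast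
        next
          case (Inr q)
          then obtain v i where q: "y = Inr (v, i)" by (cases q) auto
          then have v: "v \<in> XC" "E v w" "v \<notin> AC" using e yW \<open>x = Inl w\<close> by auto
          have "v \<notin> AB" using ABRe[of v w] wAR v(2) by blast
          then have "v \<in> AR" using inV[of v] v(1,3) XC_V by blast
          then show ?thesis unfolding P_def Rg_def using ry q by blast
        qed
      next
        case (Inr q)
        then obtain v i where q: "x = Inr (v, i)" by (cases q) auto
        then have vAR: "v \<in> AR" using Rx unfolding Rg_def by auto
        show ?thesis
        proof (cases y)
          case (Inl w')
          then have w': "w' \<in> XB" "E v w'" "w' \<notin> S" using e yW q by auto
          have "w' \<in> V" using w'(1) XB_V by blast
          moreover have "w' \<notin> AB" using ABRe[of w' v] vAR Esym[OF w'(2)] by blast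
          moreover have "w' \<notin> AC" using False w' ry Inl unfolding Y_def by blast
          ultimately have "w' \<in> AR" using inV by blast
          then show ?thesis unfolding P_def Rg_def using ry Inl by blast
        next
          case (Inr q')
          then show ?thesis using e q by (cases q') auto
        qed
      qed
    qed
  qed
  have "P (Inl u)" by (rule reach_induct_inv[where P=P, OF r P0 Pstep])
  moreover have "\<not> Rg (Inl u)" using u(1) ABR ACR unfolding Rg_def AA_def by auto
  ultimately obtain y where y: "y \<in> Y" "y \<notin> S" "reach ?W Ea t3 (Inl y)" unfolding P_def by blast
  obtain t where t: "t \<in> T1 \<union> T2" "reach ?W Ea t (Inl y)" using reach_Y[OF y(1,2)] by blast
  have "reach ?W Ea t t3" using reach_trans[OF t(2) reach_sym[OF Ea_sym y(3)]] .
  then show False using t(1) t3 S13 S23 unfolding separates_def by blast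
qed

end

context ctx2
begin

definition "R3 = {u \<in> XB. \<exists>t\<in>T3. reach (Wg - Inl ` S) Ea t (Inl u)}"
definition "ABn = (AB - XB) \<union> (XB - S - R3)"
definition "ACn = (AC - XB) \<union> S"
definition "ARn = (AR - XB) \<union> R3"
definition "RT1 u = (\<exists>t\<in>T1. reach (Wg - Inl ` S) Ea t (Inl u))"
definition "cn u = (if u \<in> XB then (f u \<noteq> RT1 u) else g u)"

lemma R3_XB: "R3 \<subseteq> XB" unfolding R3_def by blast

lemma R3_S: "R3 \<inter> S = {}"
proof -
  have "\<And>u. u \<in> R3 \<Longrightarrow> u \<notin> S"
  proof -
    fix u assume "u \<in> R3"
    then obtain t where "reach (Wg - Inl ` S) Ea t (Inl u)" unfolding R3_def by blast
    then have "Inl u \<in> Wg - Inl ` S" by (rule reach_in)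
    then show "u \<notin> S" by blast
  qed
  then show ?thesis by blast
qed

lemma inWg: "u \<in> XB \<Longrightarrow> u \<notin> S \<Longrightarrow> Inl u \<in> Wg - Inl ` S" by auto

lemma R3_closed:
  assumes "u \<in> R3" "w \<in> XB" "w \<notin> S" "E u w"
  shows "w \<in> R3"
proof -
  obtain t where t: "t \<in> T3" "reach (Wg - Inl ` S) Ea t (Inl u)" using assms(1) unfolding R3_def by blast
  have "Ea (Inl u) (Inl w)" using assms R3_XB by auto
  then have "reach (Wg - Inl ` S) Ea t (Inl w)" using reach_step[OF t(2) _ inWg[OF assms(2,3)]] by blast
  then show ?thesis unfolding R3_def using t(1) assms(2) by blast
qed

lemma R3_T3adj:
  assumes "w \<in> XC" "w \<in> AR" "u \<in> XB" "u \<notin> S" "E w u"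
  shows "u \<in> R3"
proof -
  define p where "p = (Inr (w, f u) :: 'a + 'a \<times> bool)"
  have pT: "p \<in> T3" unfolding p_def using assms by simp
  have pW: "p \<in> Wg - Inl ` S" unfolding p_def using assms ACR by auto
  have e: "Ea p (Inl u)" unfolding p_def using assms by simp
  have "reach (Wg - Inl ` S) Ea p (Inl u)" using reach_step[OF reach_refl[where E=Ea, OF pW] e inWg[OF assms(3,4)]] .
  then show ?thesis unfolding R3_def using pT assms(3) by blast
qed

lemma R3_ABadj:
  assumes "u \<in> R3" "w \<in> XC" "w \<in> AB" "E u w"
  shows False
proof -
  obtain t where t: "t \<in> T3" "reach (Wg - Inl ` S) Ea t (Inl u)" using assms(1) unfolding R3_def by blast
  have uB: "u \<in> XB" using assms(1) R3_XB by blast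
  define p where "p = (Inr (w, f u) :: 'a + 'a \<times> bool)"
  have pT: "p \<in> T1 \<union> T2" unfolding p_def using assms by (cases "f u = g w") auto
  have pW: "p \<in> Wg - Inl ` S" unfolding p_def using assms ABC by auto
  have e: "Ea (Inl u) p" unfolding p_def using assms uB Esym[OF assms(4)] by simp
  have "reach (Wg - Inl ` S) Ea t p" using reach_step[OF t(2) e pW] .
  then have "reach (Wg - Inl ` S) Ea p t" by (rule reach_sym[OF Ea_sym, rotated])
  then show False using pT t(1) S13 S23 unfolding separates_def by blast
qed

lemma cn_proper: "proper_2col E ABn cn"
proof -
  have mixed: "\<And>u w. u \<in> XB - S - R3 \<Longrightarrow> w \<in> AB - XB \<Longrightarrow> E u w \<Longrightarrow> cn u \<noteq> cn w"
  proof -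
    fix u w assume u: "u \<in> XB - S - R3" and w: "w \<in> AB - XB" and e: "E u w"
    have uB: "u \<in> XB" using u by blast
    have "w \<notin> XR" using XBRe[OF uB] e by blast
    then have wC: "w \<in> XC" using w AU XU by blast
    have iu: "Inl u \<in> Wg - Inl ` S" using u by auto
    define p where "p = (Inr (w, f u) :: 'a + 'a \<times> bool)"
    have pW: "p \<in> Wg - Inl ` S" unfolding p_def using wC w ABC by auto
    have ep: "Ea p (Inl u)" unfolding p_def using wC uB Esym[OF e] by simp
    have rp: "reach (Wg - Inl ` S) Ea p (Inl u)" using reach_step[OF reach_refl[where E=Ea, OF pW] ep iu] .
    show "cn u \<noteq> cn w"
    proof (cases "f u = g w")
      case True
      then have "p \<in> T1" unfolding p_def using wC w by simp
      then have "RT1 u" unfolding RT1_def using rp by blast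
      then show ?thesis unfolding cn_def using uB w True by simp
    next
      case False
      then have pT2: "p \<in> T2" unfolding p_def using wC w by simp
      have "\<not> RT1 u"
      proof
        assume "RT1 u"
        then obtain t where t: "t \<in> T1" "reach (Wg - Inl ` S) Ea t (Inl u)" unfolding RT1_def by blast
        have "reach (Wg - Inl ` S) Ea t p" using reach_step[OF t(2) Ea_sym[OF ep] pW] .
        then show False using S12 t(1) pT2 unfolding separates_def by blast
      qed
      then show ?thesis unfolding cn_def using uB w False by simp
    qed
  qed
  show ?thesis unfolding proper_2col_def
  proof (intro ballI impI)
    fix u w assume u: "u \<in> ABn" and w: "w \<in> ABn" and e: "E u w"
    show "cn u \<noteq> cn w"
    proof (cases "u \<in> XB")
      case uB: True
      then have u': "u \<in> XB - S - R3" using u unfolding ABn_def by blast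
      show ?thesis
      proof (cases "w \<in> XB")
        case wB: True
        then have w': "w \<in> XB - S - R3" using w unfolding ABn_def by blast
        have iu: "Inl u \<in> Wg - Inl ` S" and iw: "Inl w \<in> Wg - Inl ` S" using u' w' by auto
        have e1: "Ea (Inl u) (Inl w)" and e2: "Ea (Inl w) (Inl u)" using uB wB e Esym[OF e] by auto
        have "RT1 u \<longleftrightarrow> RT1 w"
        proof
          assume "RT1 u"
          then obtain t where t: "t \<in> T1" "reach (Wg - Inl ` S) Ea t (Inl u)" unfolding RT1_def by blast
          show "RT1 w" unfolding RT1_def using reach_step[OF t(2) e1 iw] t(1) by blast
        next
          assume "RT1 w"
          then obtain t where t: "t \<in> T1" "reach (Wg - Inl ` S) Ea t (Inl w)" unfolding RT1_def by blast
          show "RT1 u" unfolding RT1_def using reach_step[OF t(2) e2 iu] t(1) by blast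
        qed
        then show ?thesis using fprop[OF uB wB e] unfolding cn_def using uB wB by auto
      next
        case wB: False
        then have "w \<in> AB - XB" using w unfolding ABn_def by blast
        then show ?thesis using mixed[OF u' _ e] by blast
      qed
    next
      case uB: False
      then have u': "u \<in> AB - XB" using u unfolding ABn_def by blast
      show ?thesis
      proof (cases "w \<in> XB")
        case wB: True
        then have w': "w \<in> XB - S - R3" using w unfolding ABn_def by blast
        show ?thesis using mixed[OF w' u' Esym[OF e]] by simp
      next
        case wB: False
        then have "w \<in> AB" using w unfolding ABn_def by blast
        then show ?thesis using gprop[OF _ _ e] u' uB wB unfolding cn_def by simp
      qed
    qed
  qed
qed

lemma noedge:
  assumes u: "u \<in> ABn" and v: "v \<in> ARn"
  shows "\<not> E u v"
proof
  assume e: "E u v"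
  show False
  proof (cases "u \<in> XB")
    case uB: True
    then have u': "u \<in> XB" "u \<notin> S" "u \<notin> R3" using u unfolding ABn_def by auto
    show False
    proof (cases "v \<in> R3")
      case True
      then show False using R3_closed[OF True u'(1,2) Esym[OF e]] u'(3) by blast
    next
      case False
      then have vA: "v \<in> AR" "v \<notin> XB" using v unfolding ARn_def by auto
      have "v \<notin> XR" using XBRe[OF uB] e by blast
      then have "v \<in> XC" using vA AU XU by blast
      then show False using R3_T3adj[OF _ vA(1) u'(1,2) Esym[OF e]] u'(3) by blast
    qed
  next
    case uB: False
    then have uA: "u \<in> AB" using u unfolding ABn_def by blast
    show False
    proof (cases "v \<in> R3")
      case True
      then have vB: "v \<in> XB" using R3_XB by blast
      have "u \<notin> XR" using XBRe[OF vB] Esym[OF e] by blast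
      then have "u \<in> XC" using uA uB AU XU by blast
      then show False using R3_ABadj[OF True _ uA Esym[OF e]] by blast
    next
      case False
      then have "v \<in> AR" using v unfolding ARn_def by auto
      then show False using ABRe[OF uA] e by blast
    qed
  qed
qed

lemma S_ne: "S \<noteq> {}"
proof -
  have "finite Y" using finite_subset[OF Y_XB finXB] .
  then have "card Y > 0" using Yne by (simp add: card_gt_0_iff)
  then show ?thesis using cardS by auto
qed

lemma disj: "ABn \<inter> ACn = {}" "ABn \<inter> ARn = {}" "ACn \<inter> ARn = {}"
  unfolding ABn_def ACn_def ARn_def using ABC ABR ACR R3_S R3_XB SXB by blast+

lemma occn: "is_OCC V E ABn ACn ARn"
proof -
  have u1: "ABn \<union> ACn \<union> ARn \<subseteq> V" unfolding ABn_def ACn_def ARn_def using AU XB_V SXB R3_XB by blast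
  have u2: "V \<subseteq> ABn \<union> ACn \<union> ARn"
  proof
    fix x assume x: "x \<in> V"
    show "x \<in> ABn \<union> ACn \<union> ARn"
    proof (cases "x \<in> XB")
      case True then show ?thesis unfolding ABn_def ACn_def ARn_def by blast
    next
      case False then show ?thesis using inV[OF x] unfolding ABn_def ACn_def ARn_def by blast
    qed
  qed
  have "bipartite_on E ABn" unfolding bipartite_on_def using cn_proper by blast
  moreover have "\<forall>u\<in>ABn. \<forall>v\<in>ARn. \<not> E u v" using noedge by blast
  moreover have "ABn \<union> ACn \<noteq> {}" using S_ne unfolding ACn_def by blast
  ultimately show ?thesis unfolding is_OCC_def using u1 u2 disj by blast
qed

lemma cardn: "card ACn = card AC"
proof -
  have f1: "finite (AC - XB)" using finAC by simp
  have "card ACn = card (AC - XB) + card S"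
    unfolding ACn_def using card_Un_disjoint[OF f1 finS] SXB by blast
  moreover have "card AC = card (AC - XB) + card Y"
    using card_Int_Diff[OF finAC, of XB] unfolding Y_def by simp
  ultimately show ?thesis using cardS by simp
qed

lemma VH_sub: "VH \<subseteq> AB \<union> AC" and EH_E: "\<And>u v. EH u v \<Longrightarrow> E u v"
  and EH_sym: "\<And>u v. EH u v \<Longrightarrow> EH v u" and EH_in: "\<And>u v. EH u v \<Longrightarrow> u \<in> VH \<and> v \<in> VH"
  using sub unfolding subgraph_of_def by blast+

lemma finVH: "finite VH" using finite_subset[OF VH_sub] finAB finAC by blast

lemma VHn: "VH - ACn \<subseteq> ABn"
proof
  fix x assume x: "x \<in> VH - ACn"
  show "x \<in> ABn"
  proof (cases "x \<in> XB")
    case True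
    then have "x \<notin> S" "x \<in> AA" using x VH_sub unfolding ACn_def AA_def by auto
    then have "x \<notin> R3" using noR3 unfolding R3_def by blast
    then show ?thesis using True \<open>x \<notin> S\<close> unfolding ABn_def by blast
  next
    case False
    then show ?thesis using x VH_sub unfolding ABn_def ACn_def by blast
  qed
qed

lemma VHsubn: "VH \<subseteq> ABn \<union> ACn" using VHn by blast

lemma octVH: "oct VH EH = card AC" using cert unfolding certificate_def by blast

lemma tightn: "card ACn = oct (ABn \<union> ACn) E"
proof -
  have "ABn \<union> ACn \<subseteq> V" unfolding ABn_def ACn_def using AU XB_V SXB by blast
  then have finU: "finite (ABn \<union> ACn)" using finite_subset[OF _ finV] by blast
  have "(ABn \<union> ACn) - ACn = ABn" using disj(1) by blast
  then have pc: "proper_2col E ((ABn \<union> ACn) - ACn) cn" using cn_proper by simp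
  have sACn: "ACn \<subseteq> ABn \<union> ACn" by blast
  have le: "oct (ABn \<union> ACn) E \<le> card ACn" by (rule oct_le[OF finU sACn pc])
  have "oct VH EH \<le> oct (ABn \<union> ACn) E" by (rule oct_sub[OF finU VHsubn EH_E])
  then show ?thesis using le octVH cardn by linarith
qed

lemma certn: "certificate VH EH ACn z"
proof -
  have pc: "proper_2col EH (VH - ACn) cn"
    using cn_proper VHn EH_E unfolding proper_2col_def by blast
  obtain c2 where c2: "proper_2col EH (VH - AC) c2" using cert unfolding certificate_def bipartite_on_def by blast
  have o: "oct VH EH = card ACn" using octVH cardn by simp
  have finACn: "finite ACn" unfolding ACn_def using finAC finS by simp
  have "\<forall>v\<in>VH. card (ACn \<inter> component VH EH v) \<le> z"
  proof
    fix v assume v: "v \<in> VH"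
    have "card (ACn \<inter> component VH EH v) \<le> card (AC \<inter> component VH EH v)"
      by (rule comp_count[OF finVH EH_sym o finACn pc c2])
    also have "\<dots> \<le> z" using cert v unfolding certificate_def by blast
    finally show "card (ACn \<inter> component VH EH v) \<le> z" .
  qed
  then show ?thesis unfolding certificate_def bipartite_on_def using pc o by blast
qed

lemma subn: "subgraph_of VH EH V E (ABn \<union> ACn)"
proof -
  have "ABn \<union> ACn \<subseteq> V" unfolding ABn_def ACn_def using AU XB_V SXB by blast
  then show ?thesis unfolding subgraph_of_def using VHsubn EH_sym EH_E EH_in by blast
qed

lemma final: "z_tight_OCC V E z ABn ACn ARn \<and> card ACn = card AC \<and> ACn \<inter> XB \<subseteq> S"
proof -
  have "tight_OCC V E ABn ACn ARn" unfolding tight_OCC_def using occn tightn by blast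
  then have "z_tight_OCC V E z ABn ACn ARn" unfolding z_tight_OCC_def using subn certn by blast
  moreover have "ACn \<inter> XB \<subseteq> S" unfolding ACn_def by blast
  ultimately show ?thesis using cardn by blast
qed

end

theorem lemma5p1:
  fixes V :: "'a set" and E :: "'a \<Rightarrow> 'a \<Rightarrow> bool" and z :: nat
    and XB XC XR AB AC AR Bs :: "'a set" and f :: "'a \<Rightarrow> bool"
  assumes "graph V E"
    and "is_OCC V E XB XC XR"
    and "proper_2col E XB f"
    and "star_property E XB XC f Bs"
    and "z_tight_OCC V E z AB AC AR"
  shows "\<exists>AB' AC' AR'. z_tight_OCC V E z AB' AC' AR' \<and> card AC' = card AC
           \<and> AC' \<inter> XB \<subseteq> Bs"
proof (cases "AC \<inter> XB \<subseteq> Bs")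
  case True
  then show ?thesis using assms(5) by blast
next
  case False
  have finV: "finite V" and Esym: "\<And>u v. E u v \<Longrightarrow> E v u" using assms(1) unfolding graph_def by auto
  have XU: "XB \<union> XC \<union> XR = V" and XBC: "XB \<inter> XC = {}" and XBR: "XB \<inter> XR = {}" and XCR: "XC \<inter> XR = {}"
    and XBRe: "\<And>u v. u \<in> XB \<Longrightarrow> v \<in> XR \<Longrightarrow> \<not> E u v"
    using assms(2) unfolding is_OCC_def by auto
  have fprop: "\<And>u w. u \<in> XB \<Longrightarrow> w \<in> XB \<Longrightarrow> E u w \<Longrightarrow> f u \<noteq> f w"
    using assms(3) unfolding proper_2col_def by blast
  have BsXB: "Bs \<subseteq> XB" using assms(4) unfolding star_property_def by blast
  have st: "\<forall>T1 T2 T3 TX. T1 \<union> T2 \<union> T3 \<union> TX = aux_T XC \<and>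
        T1 \<inter> T2 = {} \<and> T1 \<inter> T3 = {} \<and> T1 \<inter> TX = {} \<and> T2 \<inter> T3 = {} \<and> T2 \<inter> TX = {}
        \<and> T3 \<inter> TX = {} \<longrightarrow>
      (\<exists>S. S \<subseteq> XB \<and> card S \<le> card (aux_T XC) \<and> sep3 E XB XC f T1 T2 T3 TX S) \<longrightarrow>
      (\<exists>S. S \<subseteq> Bs \<and> sep3 E XB XC f T1 T2 T3 TX S \<and>
         (\<forall>S'. S' \<subseteq> XB \<and> sep3 E XB XC f T1 T2 T3 TX S' \<longrightarrow> card S \<le> card S'))"
    using assms(4) unfolding star_property_def by (rule conjunct2)
  have occA: "is_OCC V E AB AC AR" and tightA: "card AC = oct (AB \<union> AC) E"
    using assms(5) unfolding z_tight_OCC_def tight_OCC_def by auto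
  obtain VH EH where sub: "subgraph_of VH EH V E (AB \<union> AC)" and cert: "certificate VH EH AC z"
    using assms(5) unfolding z_tight_OCC_def by blast
  have AU: "AB \<union> AC \<union> AR = V" and ABC: "AB \<inter> AC = {}" and ABR: "AB \<inter> AR = {}" and ACR: "AC \<inter> AR = {}"
    and ABRe: "\<And>u v. u \<in> AB \<Longrightarrow> v \<in> AR \<Longrightarrow> \<not> E u v" and bipA: "bipartite_on E AB"
    using occA unfolding is_OCC_def by auto
  obtain g :: "'a \<Rightarrow> bool" where gp: "\<forall>u\<in>AB. \<forall>v\<in>AB. E u v \<longrightarrow> g u \<noteq> g v"
    using bipA unfolding bipartite_on_def proper_2col_def by blast
  have gprop: "\<And>u w. u \<in> AB \<Longrightarrow> w \<in> AB \<Longrightarrow> E u w \<Longrightarrow> g u \<noteq> g w" using gp by blast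
  interpret c: ctx V E XB XC XR f AB AC AR g
    by (rule ctx.intro[OF finV Esym XU XBC XBR XCR XBRe fprop AU ABC ABR ACR ABRe gprop tightA])
  have Yne: "c.Y \<noteq> {}" using False BsXB unfolding c.Y_def by blast
  have pre: "\<exists>S. S \<subseteq> XB \<and> card S \<le> card (aux_T XC) \<and> sep3 E XB XC f c.T1 c.T2 c.T3 c.TX S"
    using c.Y_XB c.Ycard c.Ysep by blast
  obtain S where S: "S \<subseteq> Bs" "sep3 E XB XC f c.T1 c.T2 c.T3 c.TX S"
    "\<forall>S'. S' \<subseteq> XB \<and> sep3 E XB XC f c.T1 c.T2 c.T3 c.TX S' \<longrightarrow> card S \<le> card S'"
    using st[rule_format, OF c.part pre] by blast
  have SY: "card S \<le> card c.Y" using S(3) c.Y_XB c.Ysep by blast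
  have SXB: "S \<subseteq> XB" using S(1) BsXB by blast
  interpret c2: ctx2 V E XB XC XR f AB AC AR g S VH EH z
    by (rule ctx2.intro[OF ctx.intro[OF finV Esym XU XBC XBR XCR XBRe fprop AU ABC ABR ACR ABRe gprop tightA]
          ctx2_axioms.intro[OF SXB S(2) SY Yne sub cert]])
  have "z_tight_OCC V E z c2.ABn c2.ACn c2.ARn \<and> card c2.ACn = card AC \<and> c2.ACn \<inter> XB \<subseteq> S"
    by (rule c2.final)
  then show ?thesis using S(1) by blast
qed

end
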